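(* Let $(\Omega,\mathcal{F})$ be a standard measurable space, let $T:\Omega\to\Omega$ be a measurable transformation, and let $V$ be a $T$-invariant upper probability on $(\Omega,\mathcal{F})$. Let $f:\Omega\to\mathbb{R}$ be bounded and $\mathcal{F}$-measurable, and let $g_f:\Omega\to\mathbb{R}$ be a bounded $\mathcal{I}$-measurable function such that for every $T$-invariant probability $P$ on $(\Omega,\mathcal{F})$ one has $\mathbb{E}_P(f\mid\mathcal{I})=g_f$ $P$-almost surely (such a $g_f$ exists). Then $$V\Big(\Omega\setminus\Big\{\omega\in\Omega:\lim_{n\to\infty}\frac{1}{n}\sum_{i=0}^{n-1}f(T^i\omega)=g_f(\omega)\Big\}\Big)=0.$$
   Context: A measurable space is standard if it is isomorphic (via a bijection preserving measurable sets in both directions) to a complete separable metric space with its Borel $\sigma$-algebra. A capacity on $(\Omega,\mathcal{F})$ is a map $\mu:\mathcal{F}\to[0,1]$ with $\mu(\emptyset)=0$, $\mu(\Omega)=1$ and $\mu(A)\le\mu(B)$ whenever $A\subset B$. An upper probability is a capacity $V$ for which there exists a set $\Lambda$ of ($\sigma$-additive) probabilities on $(\Omega,\mathcal{F})$, compact in the weak* topology (the topology of setwise convergence $P_\alpha(A)\to P(A)$ for all $A\in\mathcal{F}$), such that $V(A)=\max_{P\in\Lambda}P(A)$ for all $A\in\mathcal{F}$. $V$ is $T$-invariant if $V(T^{-1}A)=V(A)$ for all $A\in\mathcal{F}$. $\mathcal{I}=\{A\in\mathcal{F}:T^{-1}A=A\}$ is the $\sigma$-algebra of invariant sets, and $\mathbb{E}_P(f\mid\mathcal{I})$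 is the conditional expectation with respect to $P$. *)

theory Defs
  imports "HOL-Probability.Probability"
begin

definition Borel_of :: "'b topology \<Rightarrow> 'b measure" where
  "Borel_of X = sigma (topspace X) {U. openin X U}"

text \<open>The carrier of the metric
  space lives in the type 'b (a free type variable in the theorem, hence arbitrary).\<close>
definition standard_space_via :: "'b itself \<Rightarrow> 'a measure \<Rightarrow> bool" where
  "standard_space_via _ M \<longleftrightarrow>
     (\<exists>(S::'b set) d h. Metric_space S d \<and> Metric_space.mcomplete S d \<and>
        separable_space (Metric_space.mtopology S d) \<and>
        bij_betw h (space M) S \<and>
        h \<in> M \<rightarrow>\<^sub>M Borel_of (Metric_space.mtopology S d) \<and>
        the_inv_into (space M) h \<in> Borel_of (Metric_space.mtopology S d) \<rightarrow>\<^sub>M M)"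

definition capacity :: "'a measure \<Rightarrow> ('a set \<Rightarrow> real) \<Rightarrow> bool" where
  "capacity M \<mu> \<longleftrightarrow> \<mu> {} = 0 \<and> \<mu> (space M) = 1 \<and>
     (\<forall>A\<in>sets M. 0 \<le> \<mu> A \<and> \<mu> A \<le> 1) \<and>
     (\<forall>A\<in>sets M. \<forall>B\<in>sets M. A \<subseteq> B \<longrightarrow> \<mu> A \<le> \<mu> B)"

definition probs_on :: "'a measure \<Rightarrow> 'a measure set" where
  "probs_on M = {P. prob_space P \<and> sets P = sets M}"

text \<open>Compactness in the topology of setwise convergence: the weak* topology is the initial
  topology of the evaluations P \<mapsto> P(A), A \<in> sets M, i.e. the topology induced by the
  (injective) embedding into the product space of reals indexed by sets M.\<close>
definition setwise_compact :: "'a measure \<Rightarrow> 'a measure set \<Rightarrow> bool" where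
  "setwise_compact M \<Lambda> \<longleftrightarrow>
     compactin (product_topology (\<lambda>_. euclideanreal) (sets M))
       ((\<lambda>P. restrict (\<lambda>A. measure P A) (sets M)) ` \<Lambda>)"

definition upper_probability :: "'a measure \<Rightarrow> ('a set \<Rightarrow> real) \<Rightarrow> bool" where
  "upper_probability M V \<longleftrightarrow> capacity M V \<and>
     (\<exists>\<Lambda>. \<Lambda> \<subseteq> probs_on M \<and> setwise_compact M \<Lambda> \<and>
        (\<forall>A\<in>sets M. (\<exists>P\<in>\<Lambda>. V A = measure P A) \<and> (\<forall>P\<in>\<Lambda>. measure P A \<le> V A)))"

definition invariant_capacity :: "'a measure \<Rightarrow> ('a \<Rightarrow> 'a) \<Rightarrow> ('a set \<Rightarrow> real) \<Rightarrow> bool" where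
  "invariant_capacity M T V \<longleftrightarrow> (\<forall>A\<in>sets M. V (T -` A \<inter> space M) = V A)"

definition invariant_sets :: "'a measure \<Rightarrow> ('a \<Rightarrow> 'a) \<Rightarrow> 'a set set" where
  "invariant_sets M T = {A\<in>sets M. T -` A \<inter> space M = A}"

definition inv_algebra :: "'a measure \<Rightarrow> ('a \<Rightarrow> 'a) \<Rightarrow> 'a measure" where
  "inv_algebra M T = sigma (space M) (invariant_sets M T)"

definition invariant_prob :: "'a measure \<Rightarrow> ('a \<Rightarrow> 'a) \<Rightarrow> 'a measure \<Rightarrow> bool" where
  "invariant_prob M T P \<longleftrightarrow> P \<in> probs_on M \<and>
     (\<forall>A\<in>sets M. measure P (T -` A \<inter> space M) = measure P A)"

end

theory Submission
  imports Defs
begin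


lemma funpow_meas: "T \<in> M \<rightarrow>\<^sub>M M \<Longrightarrow> (T ^^ n) \<in> M \<rightarrow>\<^sub>M M"
  by (induction n) (auto simp: measurable_ident intro: measurable_comp)

definition birk :: "('a \<Rightarrow> 'a) \<Rightarrow> ('a \<Rightarrow> real) \<Rightarrow> nat \<Rightarrow> 'a \<Rightarrow> real" where
  "birk T h n x = (\<Sum>i<n. h ((T ^^ i) x))"

lemma birk_0[simp]: "birk T h 0 x = 0" by (simp add: birk_def)

lemma birk_Suc: "birk T h (Suc n) x = h x + birk T h n (T x)"
  unfolding birk_def sum.lessThan_Suc_shift by (simp add: funpow_Suc_right del: funpow.simps)

lemma birk_meas:
  assumes "T \<in> M \<rightarrow>\<^sub>M M" "h \<in> borel_measurable M"
  shows "birk T h n \<in> borel_measurable M"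
proof -
  have "\<And>i. (\<lambda>x. h ((T ^^ i) x)) \<in> borel_measurable M"
    using measurable_comp[OF funpow_meas[OF assms(1)] assms(2)] by (simp add: o_def)
  then show ?thesis unfolding birk_def by (intro borel_measurable_sum) auto
qed

lemma birk_bound:
  assumes "T \<in> M \<rightarrow>\<^sub>M M" "\<And>x. x \<in> space M \<Longrightarrow> \<bar>h x\<bar> \<le> C" "x \<in> space M"
  shows "\<bar>birk T h n x\<bar> \<le> n * C"
proof -
  have "\<bar>birk T h n x\<bar> \<le> (\<Sum>i<n. \<bar>h ((T ^^ i) x)\<bar>)" unfolding birk_def by (rule sum_abs)
  also have "\<dots> \<le> (\<Sum>i<n. C)"
    by (intro sum_mono assms(2) measurable_space[OF funpow_meas[OF assms(1)] assms(3)])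
  finally show ?thesis by simp
qed

lemma integral_T_inv:
  fixes u :: "'a \<Rightarrow> real"
  assumes Q: "prob_space Q" and T: "T \<in> Q \<rightarrow>\<^sub>M Q"
    and inv: "\<forall>A\<in>sets Q. measure Q (T -` A \<inter> space Q) = measure Q A"
    and u: "u \<in> borel_measurable Q"
  shows "(\<integral>x. u (T x) \<partial>Q) = (\<integral>x. u x \<partial>Q)"
proof -
  interpret prob_space Q by fact
  have "distr Q Q T = Q"
  proof (rule measure_eqI)
    fix A assume A: "A \<in> sets (distr Q Q T)"
    then have A': "A \<in> sets Q" by simp
    have "emeasure (distr Q Q T) A = emeasure Q (T -` A \<inter> space Q)"
      using A' T by (simp add: emeasure_distr)
    also have "\<dots> = measure Q (T -` A \<inter> space Q)" by (simp add: emeasure_eq_measure)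
    also have "\<dots> = measure Q A" using inv A' by simp
    also have "\<dots> = emeasure Q A" by (simp add: emeasure_eq_measure)
    finally show "emeasure (distr Q Q T) A = emeasure Q A" .
  qed simp
  then have "(\<integral>x. u x \<partial>Q) = (\<integral>x. u x \<partial>distr Q Q T)" by simp
  also have "\<dots> = (\<integral>x. u (T x) \<partial>Q)" by (rule integral_distr[OF T u])
  finally show ?thesis by simp
qed

lemma maximal_ergodic:
  fixes h :: "'a \<Rightarrow> real"
  assumes Q: "prob_space Q" and T: "T \<in> Q \<rightarrow>\<^sub>M Q"
    and inv: "\<forall>A\<in>sets Q. measure Q (T -` A \<inter> space Q) = measure Q A"
    and hm: "h \<in> borel_measurable Q" and hb: "\<And>x. x \<in> space Q \<Longrightarrow> \<bar>h x\<bar> \<le> C"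
    and F: "F \<in> sets Q" and Finv: "\<And>x. x \<in> space Q \<Longrightarrow> T x \<in> F \<longleftrightarrow> x \<in> F"
    and Fsub: "F \<subseteq> {x. \<exists>n. birk T h n x > 0}"
  shows "(\<integral>x. indicator F x * h x \<partial>Q) \<ge> 0"
proof -
  interpret prob_space Q by fact
  define h' where "h' x = indicator F x * h x" for x
  have h'm: "h' \<in> borel_measurable Q" unfolding h'_def using hm F by measurable
  have C0: "0 \<le> C"
  proof -
    obtain x where "x \<in> space Q" using not_empty by blast
    from hb[OF this] show ?thesis by linarith
  qed
  have h'b: "\<bar>h' x\<bar> \<le> C" if "x \<in> space Q" for x
    using hb[OF that] C0 by (auto simp: h'_def indicator_def)
  have indT: "indicator F ((T ^^ i) x) = (indicator F x :: real)" if "x \<in> space Q" for i x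
  proof (induction i)
    case (Suc i)
    have "(T ^^ i) x \<in> space Q" using measurable_space[OF funpow_meas[OF T] that] .
    then show ?case using Finv[of "(T ^^ i) x"] Suc by (simp add: indicator_def)
  qed simp
  have birk': "birk T h' n x = indicator F x * birk T h n x" if "x \<in> space Q" for n x
    unfolding birk_def h'_def using indT[OF that] by (simp add: sum_distrib_left)
  define Mx where "Mx N x = Max ((\<lambda>k. birk T h' k x) ` {..N})" for N x
  have Mxm: "Mx N \<in> borel_measurable Q" for N
    unfolding Mx_def by (intro borel_measurable_Max birk_meas[OF T h'm]) auto
  have Mx_ge: "birk T h' k x \<le> Mx N x" if "k \<le> N" for k N x
    unfolding Mx_def by (rule Max_ge) (use that in auto)
  have Mx0: "0 \<le> Mx N x" for N x using Mx_ge[of 0 N x] by simp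
  have Mx_in: "\<exists>k\<le>N. Mx N x = birk T h' k x" for N x
  proof -
    have "Mx N x \<in> (\<lambda>k. birk T h' k x) ` {..N}" unfolding Mx_def by (rule Max_in) auto
    then show ?thesis by auto
  qed
  have Mxb: "\<bar>Mx N x\<bar> \<le> N * C" if "x \<in> space Q" for N x
  proof -
    obtain k where k: "k \<le> N" "Mx N x = birk T h' k x" using Mx_in by blast
    have "\<bar>birk T h' k x\<bar> \<le> k * C" by (rule birk_bound[OF T h'b that])
    also have "\<dots> \<le> N * C" using k C0 by (intro mult_right_mono) auto
    finally show ?thesis using k by simp
  qed
  define G where "G N = {x \<in> space Q. 0 < Mx N x}" for N
  have Gm: "G N \<in> sets Q" for N unfolding G_def using Mxm[of N] by measurable
  have key: "Mx N x - Mx N (T x) \<le> indicator (G N) x * h' x" if x: "x \<in> space Q" for N x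
  proof (cases "x \<in> G N")
    case True
    then have pos: "0 < Mx N x" by (simp add: G_def)
    obtain k where k: "k \<le> N" "Mx N x = birk T h' k x" using Mx_in by blast
    with pos obtain j where j: "k = Suc j" by (cases k) auto
    have "birk T h' j (T x) \<le> Mx N (T x)" using k j by (intro Mx_ge) auto
    then show ?thesis using True k j by (simp add: birk_Suc)
  next
    case False
    then have "Mx N x = 0" using Mx0[of N x] x by (simp add: G_def)
    then show ?thesis using False Mx0[of N "T x"] by simp
  qed
  have intMx: "integrable Q (Mx N)" for N
    by (rule integrable_const_bound[where B="N*C"]) (use Mxb Mxm in auto)
  have intMxT: "integrable Q (\<lambda>x. Mx N (T x))" for N
    by (rule integrable_const_bound[where B="N*C"])
      (use Mxb measurable_space[OF T] measurable_comp[OF T Mxm[of N]] in \<open>auto simp: o_def\<close>)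
  have intG: "integrable Q (\<lambda>x. indicator (G N) x * h' x)" for N
    by (rule integrable_const_bound[where B="C"])
      (use h'b Gm h'm C0 in \<open>auto simp: indicator_def\<close>)
  have nonneg: "0 \<le> (\<integral>x. indicator (G N) x * h' x \<partial>Q)" for N
  proof -
    have "(\<integral>x. Mx N x - Mx N (T x) \<partial>Q) \<le> (\<integral>x. indicator (G N) x * h' x \<partial>Q)"
      by (intro integral_mono intG key) (use intMx intMxT in auto)
    moreover have "(\<integral>x. Mx N x - Mx N (T x) \<partial>Q) = 0"
      using integral_T_inv[OF Q T inv Mxm[of N]] intMx intMxT by simp
    ultimately show ?thesis by simp
  qed
  have lim: "(\<lambda>N. \<integral>x. indicator (G N) x * h' x \<partial>Q) \<longlonglongrightarrow> (\<integral>x. indicator F x * h x \<partial>Q)"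
  proof (rule integral_dominated_convergence[where w="\<lambda>_. C"])
    show "(\<lambda>x. indicator F x * h x) \<in> borel_measurable Q" using h'm by (simp add: h'_def[abs_def])
    show "(\<lambda>x. indicator (G N) x * h' x) \<in> borel_measurable Q" for N using Gm h'm by measurable
    show "integrable Q (\<lambda>_. C)" by simp
    show "AE x in Q. norm (indicator (G N) x * h' x) \<le> C" for N
      using h'b C0 by (auto simp: indicator_def)
    show "AE x in Q. (\<lambda>N. indicator (G N) x * h' x) \<longlonglongrightarrow> indicator F x * h x"
    proof (rule AE_I2)
      fix x assume x: "x \<in> space Q"
      show "(\<lambda>N. indicator (G N) x * h' x) \<longlonglongrightarrow> indicator F x * h x"
      proof (cases "x \<in> F")
        case False then show ?thesis by (simp add: h'_def)
      next
        case True
        then obtain n where n: "birk T h n x > 0" using Fsub by blast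
        have "eventually (\<lambda>N. indicator (G N) x * h' x = indicator F x * h x) sequentially"
          unfolding eventually_sequentially
        proof (intro exI allI impI)
          fix N assume "n \<le> N"
          then have "birk T h' n x \<le> Mx N x" by (rule Mx_ge)
          then have "x \<in> G N" using n birk'[OF x, of n] True x by (simp add: G_def)
          then show "indicator (G N) x * h' x = indicator F x * h x" by (simp add: h'_def)
        qed
        then show ?thesis by (rule tendsto_eventually)
      qed
    qed
  qed
  show ?thesis by (rule LIMSEQ_le_const[OF lim]) (use nonneg in auto)
qed

lemma inv_sigma_algebra:
  assumes T: "T \<in> M \<rightarrow>\<^sub>M M"
  shows "sigma_algebra (space M) (invariant_sets M T)"
  unfolding sigma_algebra_iff2
proof (intro conjI allI impI ballI)
  show "invariant_sets M T \<subseteq> Pow (space M)"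
    by (auto simp: invariant_sets_def dest: sets.sets_into_space)
  show "{} \<in> invariant_sets M T" by (simp add: invariant_sets_def)
next
  fix s assume s: "s \<in> invariant_sets M T"
  then show "space M - s \<in> invariant_sets M T"
    using measurable_space[OF T] by (auto simp: invariant_sets_def)
next
  fix A :: "nat \<Rightarrow> 'a set" assume A: "range A \<subseteq> invariant_sets M T"
  then have "\<And>i. A i \<in> sets M" "\<And>i. T -` A i \<inter> space M = A i" by (auto simp: invariant_sets_def)
  moreover have "T -` (\<Union>i. A i) \<inter> space M = (\<Union>i. T -` A i \<inter> space M)" by auto
  ultimately show "(\<Union>i. A i) \<in> invariant_sets M T"
    unfolding invariant_sets_def by auto
qed

lemma sets_inv_algebra:
  assumes T: "T \<in> M \<rightarrow>\<^sub>M M"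
  shows "sets (inv_algebra M T) = invariant_sets M T" and "space (inv_algebra M T) = space M"
proof -
  have sub: "invariant_sets M T \<subseteq> Pow (space M)"
    by (auto simp: invariant_sets_def dest: sets.sets_into_space)
  show "sets (inv_algebra M T) = invariant_sets M T"
    unfolding inv_algebra_def using sigma_algebra.sigma_sets_eq[OF inv_sigma_algebra[OF T]] sub
    by (simp add: sets_measure_of)
  show "space (inv_algebra M T) = space M"
    unfolding inv_algebra_def using sub by (simp add: space_measure_of)
qed

lemma g_invariant:
  assumes T: "T \<in> M \<rightarrow>\<^sub>M M" and g: "g \<in> borel_measurable (inv_algebra M T)"
    and x: "x \<in> space M"
  shows "g (T x) = (g x :: real)"
proof -
  have Tx: "T x \<in> space M" using measurable_space[OF T x] .
  have inv: "T -` A \<inter> space M = A" if "A \<in> sets (inv_algebra M T)" for A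
    using that by (simp add: sets_inv_algebra[OF T] invariant_sets_def)
  have m1: "{y \<in> space M. g y < c} \<in> sets (inv_algebra M T)" for c
  proof -
    have "{y \<in> space (inv_algebra M T). g y < c} \<in> sets (inv_algebra M T)" using g by measurable
    then show ?thesis by (simp add: sets_inv_algebra(2)[OF T])
  qed
  have m2: "{y \<in> space M. g y > c} \<in> sets (inv_algebra M T)" for c
  proof -
    have "{y \<in> space (inv_algebra M T). g y > c} \<in> sets (inv_algebra M T)" using g by measurable
    then show ?thesis by (simp add: sets_inv_algebra(2)[OF T])
  qed
  have "\<not> g (T x) < g x"
  proof
    assume "g (T x) < g x"
    then have "x \<in> T -` {y \<in> space M. g y < g x} \<inter> space M" using x Tx by simp
    then show False using inv[OF m1[of "g x"]] by auto
  qed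
  moreover have "\<not> g (T x) > g x"
  proof
    assume "g (T x) > g x"
    then have "x \<in> T -` {y \<in> space M. g y > g x} \<inter> space M" using x Tx by simp
    then show False using inv[OF m2[of "g x"]] by auto
  qed
  ultimately show ?thesis by simp
qed

lemma null_from_maximal:
  fixes u :: "'a \<Rightarrow> real"
  assumes Q: "prob_space Q" and T: "T \<in> Q \<rightarrow>\<^sub>M Q"
    and inv: "\<forall>A\<in>sets Q. measure Q (T -` A \<inter> space Q) = measure Q A"
    and um: "u \<in> borel_measurable Q" and ub: "\<And>x. x \<in> space Q \<Longrightarrow> \<bar>u x\<bar> \<le> C"
    and F: "F \<in> sets Q" and Finv: "\<And>x. x \<in> space Q \<Longrightarrow> T x \<in> F \<longleftrightarrow> x \<in> F"
    and Fint: "(\<integral>x. indicator F x * u x \<partial>Q) = 0"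
    and c: "c > 0"
    and Fsub: "F \<subseteq> {x. \<exists>n. birk T (\<lambda>x. u x - c) n x > 0}"
  shows "measure Q F = 0"
proof -
  interpret prob_space Q by fact
  have C0: "0 \<le> C"
  proof -
    obtain x where "x \<in> space Q" using not_empty by blast
    from ub[OF this] show ?thesis by linarith
  qed
  have hb: "\<bar>u x - c\<bar> \<le> C + c" if "x \<in> space Q" for x using ub[OF that] c by linarith
  have "0 \<le> (\<integral>x. indicator F x * (u x - c) \<partial>Q)"
    by (rule maximal_ergodic[OF Q T inv _ hb F Finv Fsub]) (use um in auto)
  also have "(\<integral>x. indicator F x * (u x - c) \<partial>Q) = (\<integral>x. indicator F x * u x - c * indicator F x \<partial>Q)"
    by (simp add: algebra_simps)
  also have "\<dots> = (\<integral>x. indicator F x * u x \<partial>Q) - (\<integral>x. c * indicator F x \<partial>Q)"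
  proof (rule Bochner_Integration.integral_diff)
    show "integrable Q (\<lambda>x. indicator F x * u x)"
      by (rule integrable_const_bound[where B=C]) (use ub F um C0 in \<open>auto simp: indicator_def\<close>)
    show "integrable Q (\<lambda>x. c * indicator F x)" using F by (simp add: emeasure_eq_measure)
  qed
  also have "\<dots> = - c * measure Q F" using Fint F by simp
  finally have "measure Q F \<le> 0" using c by (simp add: mult_le_0_iff)
  then show ?thesis using measure_nonneg[of Q F] by linarith
qed

lemma bounded_bound:
  fixes f :: "'a \<Rightarrow> real"
  assumes "bounded (f ` S)" obtains C where "\<And>x. x \<in> S \<Longrightarrow> \<bar>f x\<bar> \<le> C"
  using assms unfolding bounded_iff by fastforce

lemma cond_int_zero:
  fixes f g :: "'a \<Rightarrow> real"
  assumes Qi: "invariant_prob M T Q" and T: "T \<in> M \<rightarrow>\<^sub>M M"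
    and fm: "f \<in> borel_measurable M" and fb: "bounded (f ` space M)"
    and gm: "g \<in> borel_measurable (inv_algebra M T)" and gb: "bounded (g ` space M)"
    and ae: "AE x in Q. real_cond_exp Q (inv_algebra M T) f x = g x"
    and F: "F \<in> invariant_sets M T"
  shows "(\<integral>x. indicator F x * (f x - g x) \<partial>Q) = 0"
proof -
  have Q: "prob_space Q" and sQ: "sets Q = sets M" using Qi by (auto simp: invariant_prob_def probs_on_def)
  have spQ: "space Q = space M" using sQ by (rule sets_eq_imp_space_eq)
  interpret prob_space Q by fact
  have sub: "subalgebra Q (inv_algebra M T)"
    unfolding subalgebra_def using sets_inv_algebra[OF T] spQ sQ
    by (auto simp: invariant_sets_def)
  interpret finite_measure_subalgebra Q "inv_algebra M T"
    by unfold_locales (rule sub)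
  obtain Cf where Cf: "\<And>x. x \<in> space M \<Longrightarrow> \<bar>f x\<bar> \<le> Cf" using bounded_bound[OF fb] by blast
  obtain Cg where Cg: "\<And>x. x \<in> space M \<Longrightarrow> \<bar>g x\<bar> \<le> Cg" using bounded_bound[OF gb] by blast
  have fQ: "f \<in> borel_measurable Q" using fm by (simp add: measurable_cong_sets[OF sQ refl])
  have gQ: "g \<in> borel_measurable Q" using measurable_from_subalg[OF sub gm] .
  have FI: "F \<in> sets (inv_algebra M T)" using F sets_inv_algebra[OF T] by simp
  have FQ: "F \<in> sets Q" using F sQ by (simp add: invariant_sets_def)
  have intf: "integrable Q f" by (rule integrable_const_bound[where B=Cf]) (use Cf fQ spQ in auto)
  have intFf: "integrable Q (\<lambda>x. indicator F x * f x)"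
  proof (rule integrable_const_bound[where B="\<bar>Cf\<bar>"])
    show "AE x in Q. norm (indicator F x * f x) \<le> \<bar>Cf\<bar>"
    proof (rule AE_I2)
      fix x assume "x \<in> space Q"
      then have "\<bar>f x\<bar> \<le> Cf" using Cf spQ by simp
      then show "norm (indicator F x * f x) \<le> \<bar>Cf\<bar>" by (simp add: indicator_def) (meson abs_ge_zero order_trans)
    qed
    show "(\<lambda>x. indicator F x * f x) \<in> borel_measurable Q"
      by (intro borel_measurable_times borel_measurable_indicator FQ fQ)
  qed
  have intFg: "integrable Q (\<lambda>x. indicator F x * g x)"
  proof (rule integrable_const_bound[where B="\<bar>Cg\<bar>"])
    show "AE x in Q. norm (indicator F x * g x) \<le> \<bar>Cg\<bar>"
    proof (rule AE_I2)
      fix x assume "x \<in> space Q"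
      then have "\<bar>g x\<bar> \<le> Cg" using Cg spQ by simp
      then show "norm (indicator F x * g x) \<le> \<bar>Cg\<bar>" by (simp add: indicator_def) (meson abs_ge_zero order_trans)
    qed
    show "(\<lambda>x. indicator F x * g x) \<in> borel_measurable Q"
      by (intro borel_measurable_times borel_measurable_indicator FQ gQ)
  qed
  have "(\<integral>x\<in>F. f x \<partial>Q) = (\<integral>x\<in>F. real_cond_exp Q (inv_algebra M T) f x \<partial>Q)"
    by (rule real_cond_exp_intA[OF intf FI])
  also have "\<dots> = (\<integral>x\<in>F. g x \<partial>Q)"
    unfolding set_lebesgue_integral_def
    by (rule integral_cong_AE) (use ae FQ gQ in auto)
  finally have eq: "(\<integral>x. indicator F x * f x \<partial>Q) = (\<integral>x. indicator F x * g x \<partial>Q)"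
    by (simp add: set_lebesgue_integral_def)
  have "(\<integral>x. indicator F x * (f x - g x) \<partial>Q) = (\<integral>x. indicator F x * f x - indicator F x * g x \<partial>Q)"
    by (simp add: algebra_simps)
  also have "\<dots> = 0" using Bochner_Integration.integral_diff[OF intFf intFg] eq by simp
  finally show ?thesis .
qed

definition Fset :: "'a measure \<Rightarrow> ('a \<Rightarrow> 'a) \<Rightarrow> ('a \<Rightarrow> real) \<Rightarrow> 'a set" where
  "Fset M T w = {x \<in> space M. \<forall>K::nat. \<exists>n. birk T w n x > real K}"

lemma Fset_props:
  assumes T: "T \<in> M \<rightarrow>\<^sub>M M" and wm: "w \<in> borel_measurable M"
  shows "Fset M T w \<in> invariant_sets M T" "Fset M T w \<subseteq> {x. \<exists>n. birk T w n x > 0}"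
proof -
  have bm: "\<And>n. birk T w n \<in> borel_measurable M" using birk_meas[OF T wm] .
  have meas: "Fset M T w \<in> sets M" unfolding Fset_def using bm by measurable
  have iff: "T x \<in> Fset M T w \<longleftrightarrow> x \<in> Fset M T w" if x: "x \<in> space M" for x
  proof -
    have Tx: "T x \<in> space M" using measurable_space[OF T x] .
    define d where "d = nat \<lceil>\<bar>w x\<bar>\<rceil>"
    have d: "\<bar>w x\<bar> \<le> real d" unfolding d_def by linarith
    show ?thesis
    proof
      assume a: "T x \<in> Fset M T w"
      show "x \<in> Fset M T w" unfolding Fset_def
      proof (intro CollectI conjI allI x)
        fix K
        obtain n where "birk T w n (T x) > real (K + d)" using a unfolding Fset_def by blast
        then have "birk T w (Suc n) x > real K" using d by (simp add: birk_Suc)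
        then show "\<exists>n. birk T w n x > real K" by blast
      qed
    next
      assume a: "x \<in> Fset M T w"
      show "T x \<in> Fset M T w" unfolding Fset_def
      proof (intro CollectI conjI allI Tx)
        fix K
        obtain n where n: "birk T w n x > real (K + d)" using a unfolding Fset_def by blast
        then obtain m where m: "n = Suc m" by (cases n) auto
        have "birk T w m (T x) > real K" using n d unfolding m by (simp add: birk_Suc)
        then show "\<exists>n. birk T w n (T x) > real K" by blast
      qed
    qed
  qed
  have "T -` Fset M T w \<inter> space M = Fset M T w"
    using iff by (auto simp: Fset_def)
  then show "Fset M T w \<in> invariant_sets M T" using meas by (simp add: invariant_sets_def)
  show "Fset M T w \<subseteq> {x. \<exists>n. birk T w n x > 0}"
  proof
    fix x assume "x \<in> Fset M T w"
    then obtain n where "birk T w n x > real 0" unfolding Fset_def by blast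
    then show "x \<in> {x. \<exists>n. birk T w n x > 0}" by auto
  qed
qed



lemma sub_inv:
  assumes T: "T \<in> M \<rightarrow>\<^sub>M M" shows "subalgebra M (inv_algebra M T)"
  unfolding subalgebra_def sets_inv_algebra[OF T] invariant_sets_def by auto

lemma birk_lin1:
  assumes "\<And>i. g ((T ^^ i) x) = g x"
  shows "birk T (\<lambda>y. f y - g y - c) n x = birk T f n x - real n * g x - real n * c"
  unfolding birk_def using assms by (simp add: sum_subtractf)

lemma birk_lin2:
  assumes "\<And>i. g ((T ^^ i) x) = g x"
  shows "birk T (\<lambda>y. g y - f y - c) n x = real n * g x - birk T f n x - real n * c"
  unfolding birk_def using assms by (simp add: sum_subtractf)

definition Bset :: "'a measure \<Rightarrow> ('a \<Rightarrow> 'a) \<Rightarrow> ('a \<Rightarrow> real) \<Rightarrow> ('a \<Rightarrow> real) \<Rightarrow> 'a set" where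
  "Bset M T f g = (\<Union>k. Fset M T (\<lambda>y. f y - g y - 1 / real (Suc k)) \<union>
                       Fset M T (\<lambda>y. g y - f y - 1 / real (Suc k)))"

lemma g_orbit:
  assumes T: "T \<in> M \<rightarrow>\<^sub>M M" and g: "g \<in> borel_measurable (inv_algebra M T)"
    and x: "x \<in> space M"
  shows "g ((T ^^ i) x) = (g x :: real)"
proof (induction i)
  case (Suc i)
  have "(T ^^ i) x \<in> space M" using measurable_space[OF funpow_meas[OF T] x] .
  then show ?case using g_invariant[OF T g] Suc by simp
qed simp

lemma Bset_inv:
  assumes T: "T \<in> M \<rightarrow>\<^sub>M M" and fm: "f \<in> borel_measurable M"
    and gm: "g \<in> borel_measurable (inv_algebra M T)"
  shows "Bset M T f g \<in> invariant_sets M T"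
proof -
  interpret S: sigma_algebra "space M" "invariant_sets M T" by (rule inv_sigma_algebra[OF T])
  have sub: "subalgebra M (inv_algebra M T)" by (rule sub_inv[OF T])
  have gM: "g \<in> borel_measurable M" by (rule measurable_from_subalg[OF sub gm])
  have "\<And>k. Fset M T (\<lambda>y. f y - g y - 1 / real (Suc k)) \<in> invariant_sets M T"
    by (rule Fset_props(1)[OF T]) (use fm gM in measurable)
  moreover have "\<And>k. Fset M T (\<lambda>y. g y - f y - 1 / real (Suc k)) \<in> invariant_sets M T"
    by (rule Fset_props(1)[OF T]) (use fm gM in measurable)
  ultimately show ?thesis unfolding Bset_def by (intro S.countable_UN) auto
qed

lemma conv_outside_Bset:
  fixes f g :: "'a \<Rightarrow> real"
  assumes T: "T \<in> M \<rightarrow>\<^sub>M M" and gm: "g \<in> borel_measurable (inv_algebra M T)"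
    and x: "x \<in> space M" and nB: "x \<notin> Bset M T f g"
  shows "(\<lambda>n. (\<Sum>i<n. f ((T ^^ i) x)) / real n) \<longlonglongrightarrow> g x"
proof (rule LIMSEQ_I)
  fix r :: real assume r: "0 < r"
  have go: "\<And>i. g ((T ^^ i) x) = g x" by (rule g_orbit[OF T gm x])
  obtain n0 where n0: "n0 > 0" "inverse (real n0) < r / 2" using ex_inverse_of_nat_less[of "r/2"] r by auto
  then obtain k where "n0 = Suc k" by (cases n0) auto
  with n0 have k: "inverse (real (Suc k)) < r / 2" by simp
  define c where "c = 1 / real (Suc k)"
  have c: "c < r / 2" "0 < c" using k by (auto simp: c_def field_simps)
  have "x \<notin> Fset M T (\<lambda>y. f y - g y - c)" using nB unfolding Bset_def c_def by blast
  then obtain K1 :: nat where K1: "\<And>n. birk T (\<lambda>y. f y - g y - c) n x \<le> real K1"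
    using x unfolding Fset_def by (auto simp: not_less)
  have "x \<notin> Fset M T (\<lambda>y. g y - f y - c)" using nB unfolding Bset_def c_def by blast
  then obtain K2 :: nat where K2: "\<And>n. birk T (\<lambda>y. g y - f y - c) n x \<le> real K2"
    using x unfolding Fset_def by (auto simp: not_less)
  obtain N :: nat where N: "real N > 2 * (real K1 + real K2) / r" using reals_Archimedean2 by blast
  show "\<exists>no. \<forall>n\<ge>no. norm ((\<Sum>i<n. f ((T ^^ i) x)) / real n - g x) < r"
  proof (intro exI allI impI)
    fix n assume n: "Suc N \<le> n"
    then have npos: "real n > 0" by simp
    define a where "a = birk T f n x"
    have a1: "a - real n * g x \<le> real K1 + real n * c"
      using K1[of n] birk_lin1[of g T x f c n, OF go] unfolding a_def by simp
    have a2: "real n * g x - a \<le> real K2 + real n * c"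
      using K2[of n] birk_lin2[of g T x f c n, OF go] unfolding a_def by simp
    have ab: "\<bar>a - real n * g x\<bar> \<le> (real K1 + real K2) + real n * c" using a1 a2 by linarith
    have "real N * r > 2 * (real K1 + real K2)" using N r by (simp add: field_simps)
    then have "real n * r > 2 * (real K1 + real K2)" using n r
    proof -
      have "real N < real n" using n by simp
      then have "real N * r < real n * r" using r by (rule mult_strict_right_mono)
      then show ?thesis using \<open>real N * r > _\<close> by linarith
    qed
    then have Kn: "(real K1 + real K2) / real n < r / 2" using npos by (simp add: field_simps)
    have "a / real n - g x = (a - real n * g x) / real n" using npos by (simp add: field_simps)
    then have "\<bar>a / real n - g x\<bar> = \<bar>a - real n * g x\<bar> / real n" using npos by simp
    also have "\<dots> \<le> ((real K1 + real K2) + real n * c) / real n"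
      using ab npos by (intro divide_right_mono) auto
    also have "\<dots> = (real K1 + real K2) / real n + c" using npos by (simp add: field_simps)
    also have "\<dots> < r" using Kn c by linarith
    finally show "norm ((\<Sum>i<n. f ((T ^^ i) x)) / real n - g x) < r"
      by (simp add: a_def birk_def)
  qed
qed

lemma Bset_null:
  fixes f g :: "'a \<Rightarrow> real"
  assumes Qi: "invariant_prob M T Q" and T: "T \<in> M \<rightarrow>\<^sub>M M"
    and fm: "f \<in> borel_measurable M" and fb: "bounded (f ` space M)"
    and gm: "g \<in> borel_measurable (inv_algebra M T)" and gb: "bounded (g ` space M)"
    and ae: "AE x in Q. real_cond_exp Q (inv_algebra M T) f x = g x"
  shows "measure Q (Bset M T f g) = 0"
proof -
  have Q: "prob_space Q" and sQ: "sets Q = sets M" using Qi by (auto simp: invariant_prob_def probs_on_def)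
  have spQ: "space Q = space M" using sQ by (rule sets_eq_imp_space_eq)
  interpret prob_space Q by fact
  have TQ: "T \<in> Q \<rightarrow>\<^sub>M Q" using T by (simp add: measurable_cong_sets[OF sQ sQ])
  have invQ: "\<forall>A\<in>sets Q. measure Q (T -` A \<inter> space Q) = measure Q A"
    using Qi sQ spQ by (simp add: invariant_prob_def)
  have sub: "subalgebra M (inv_algebra M T)" by (rule sub_inv[OF T])
  have gM: "g \<in> borel_measurable M" by (rule measurable_from_subalg[OF sub gm])
  obtain Cf where Cf: "\<And>x. x \<in> space M \<Longrightarrow> \<bar>f x\<bar> \<le> Cf" using bounded_bound[OF fb] by blast
  obtain Cg where Cg: "\<And>x. x \<in> space M \<Longrightarrow> \<bar>g x\<bar> \<le> Cg" using bounded_bound[OF gb] by blast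
  have u1m: "(\<lambda>x. f x - g x) \<in> borel_measurable Q" using fm gM by (simp add: measurable_cong_sets[OF sQ refl])
  have u2m: "(\<lambda>x. g x - f x) \<in> borel_measurable Q" using fm gM by (simp add: measurable_cong_sets[OF sQ refl])
  have u1b: "\<bar>f x - g x\<bar> \<le> Cf + Cg" if "x \<in> space Q" for x
  proof -
    have xM: "x \<in> space M" using that spQ by simp
    show ?thesis using Cf[OF xM] Cg[OF xM] abs_triangle_ineq4[of "f x" "g x"] by linarith
  qed
  have u2b: "\<bar>g x - f x\<bar> \<le> Cf + Cg" if "x \<in> space Q" for x
  proof -
    have xM: "x \<in> space M" using that spQ by simp
    show ?thesis using Cf[OF xM] Cg[OF xM] abs_triangle_ineq4[of "g x" "f x"] by linarith
  qed
  have null1: "measure Q (Fset M T (\<lambda>y. f y - g y - 1 / real (Suc k))) = 0" for k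
  proof -
    define F where "F = Fset M T (\<lambda>y. f y - g y - 1 / real (Suc k))"
    have wm: "(\<lambda>y. f y - g y - 1 / real (Suc k)) \<in> borel_measurable M" using fm gM by measurable
    have Fi: "F \<in> invariant_sets M T" unfolding F_def by (rule Fset_props(1)[OF T wm])
    have Fs: "F \<subseteq> {x. \<exists>n. birk T (\<lambda>x. (f x - g x) - 1 / real (Suc k)) n x > 0}"
      unfolding F_def by (rule Fset_props(2)[OF T wm])
    have FQ: "F \<in> sets Q" using Fi sQ by (simp add: invariant_sets_def)
    have Finv: "T x \<in> F \<longleftrightarrow> x \<in> F" if "x \<in> space Q" for x
    proof -
      have eq: "T -` F \<inter> space M = F" using Fi by (simp add: invariant_sets_def)
      have "x \<in> T -` F \<inter> space M \<longleftrightarrow> x \<in> F" by (subst eq) (rule refl)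
      then show ?thesis using that spQ by simp
    qed
    have Fint: "(\<integral>x. indicator F x * (f x - g x) \<partial>Q) = 0"
      by (rule cond_int_zero[OF Qi T fm fb gm gb ae Fi])
    have cpos: "(0::real) < 1 / real (Suc k)" by simp
    show ?thesis unfolding F_def[symmetric]
      using null_from_maximal[OF Q TQ invQ u1m u1b FQ Finv Fint cpos Fs] .
  qed
  have null2: "measure Q (Fset M T (\<lambda>y. g y - f y - 1 / real (Suc k))) = 0" for k
  proof -
    define F where "F = Fset M T (\<lambda>y. g y - f y - 1 / real (Suc k))"
    have wm: "(\<lambda>y. g y - f y - 1 / real (Suc k)) \<in> borel_measurable M" using fm gM by measurable
    have Fi: "F \<in> invariant_sets M T" unfolding F_def by (rule Fset_props(1)[OF T wm])
    have Fs: "F \<subseteq> {x. \<exists>n. birk T (\<lambda>x. (g x - f x) - 1 / real (Suc k)) n x > 0}"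
      unfolding F_def by (rule Fset_props(2)[OF T wm])
    have FQ: "F \<in> sets Q" using Fi sQ by (simp add: invariant_sets_def)
    have Finv: "T x \<in> F \<longleftrightarrow> x \<in> F" if "x \<in> space Q" for x
    proof -
      have eq: "T -` F \<inter> space M = F" using Fi by (simp add: invariant_sets_def)
      have "x \<in> T -` F \<inter> space M \<longleftrightarrow> x \<in> F" by (subst eq) (rule refl)
      then show ?thesis using that spQ by simp
    qed
    have "(\<integral>x. indicator F x * (f x - g x) \<partial>Q) = 0"
      by (rule cond_int_zero[OF Qi T fm fb gm gb ae Fi])
    moreover have "(\<lambda>x. indicator F x * (g x - f x)) = (\<lambda>x. - (indicator F x * (f x - g x)))"
      by (simp add: algebra_simps)
    ultimately have Fint: "(\<integral>x. indicator F x * (g x - f x) \<partial>Q) = 0"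
      by (simp only: Bochner_Integration.integral_minus)
    have cpos: "(0::real) < 1 / real (Suc k)" by simp
    show ?thesis unfolding F_def[symmetric]
      using null_from_maximal[OF Q TQ invQ u2m u2b FQ Finv Fint cpos Fs] .
  qed
  have sets1: "Fset M T (\<lambda>y. f y - g y - 1 / real (Suc k)) \<in> sets Q" for k
    using Fset_props(1)[OF T, of "\<lambda>y. f y - g y - 1 / real (Suc k)"] fm gM sQ
    by (simp add: invariant_sets_def)
  have sets2: "Fset M T (\<lambda>y. g y - f y - 1 / real (Suc k)) \<in> sets Q" for k
    using Fset_props(1)[OF T, of "\<lambda>y. g y - f y - 1 / real (Suc k)"] fm gM sQ
    by (simp add: invariant_sets_def)
  have "Bset M T f g \<in> null_sets Q"
    unfolding Bset_def
    using null1 null2 sets1 sets2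
    by (intro null_sets_UN null_sets.Un) (auto simp: null_sets_def emeasure_eq_measure)
  then show ?thesis by (simp add: measure_eq_0_null_sets)
qed



lemma finite_range_bound:
  assumes "finite F" "F \<subseteq> range h" shows "\<exists>N::nat. F \<subseteq> h ` {..N}"
proof -
  obtain C where C: "finite C" "F = h ` C" using finite_subset_image[OF assms(1) assms(2)] by blast
  obtain N where "\<forall>x\<in>C. x \<le> N" using C(1) finite_nat_iff_bounded_le by auto
  then show ?thesis using C by auto
qed

lemma fip_nested:
  assumes S: "compactin X S" and C: "\<And>n::nat. closedin X (C n)"
    and fin: "\<And>N. \<exists>x\<in>S. \<forall>n\<le>N. x \<in> C n"
  shows "\<exists>x\<in>S. \<forall>n. x \<in> C n"
proof -
  have H: "(\<forall>c\<in>range C. closedin X c) \<and> (\<forall>F. finite F \<and> F \<subseteq> range C \<longrightarrow> S \<inter> \<Inter> F \<noteq> {})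
      \<longrightarrow> S \<inter> \<Inter>(range C) \<noteq> {}"
    using spec[OF conjunct2[OF S[unfolded compactin_fip]], of "range C"] .
  have "S \<inter> \<Inter>(range C) \<noteq> {}"
  proof (rule H[rule_format], intro conjI)
    show "\<forall>c\<in>range C. closedin X c" using C by auto
    show "\<forall>F. finite F \<and> F \<subseteq> range C \<longrightarrow> S \<inter> \<Inter> F \<noteq> {}"
    proof (intro allI impI)
      fix F assume F: "finite F \<and> F \<subseteq> range C"
      from F have "\<exists>N::nat. F \<subseteq> C ` {..N}" by (intro finite_range_bound) auto
      then obtain N where N: "F \<subseteq> C ` {..N}" by blast
      obtain x where "x \<in> S" "\<forall>n\<le>N. x \<in> C n" using fin by blast
      then have "x \<in> S \<inter> \<Inter>F" using N by auto
      then show "S \<inter> \<Inter>F \<noteq> {}" by blast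
    qed
  qed
  then show ?thesis by blast
qed

lemma closed_pred:
  fixes F :: "'b \<Rightarrow> real"
  assumes "continuous_map X euclideanreal F" "closed S"
  shows "closedin X {x \<in> topspace X. F x \<in> S}"
proof -
  have "closedin euclideanreal S" using assms(2) closed_closedin by blast
  then show ?thesis by (rule closedin_continuous_map_preimage[OF assms(1)])
qed

lemma V_cont:
  assumes up: "upper_probability M V"
    and R: "range R \<subseteq> sets M" "decseq R" "(\<Inter>i. R i) = {}"
  shows "(\<lambda>i. V (R i)) \<longlonglongrightarrow> 0"
proof -
  obtain \<Lambda> where cap: "capacity M V" and L: "\<Lambda> \<subseteq> probs_on M" and cpt: "setwise_compact M \<Lambda>"
    and mx: "\<And>A. A \<in> sets M \<Longrightarrow> (\<exists>P\<in>\<Lambda>. V A = measure P A)"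
    and le: "\<And>A P. A \<in> sets M \<Longrightarrow> P \<in> \<Lambda> \<Longrightarrow> measure P A \<le> V A"
    using up unfolding upper_probability_def by blast
  define PT :: "('a set \<Rightarrow> real) topology" where "PT = product_topology (\<lambda>_. euclideanreal) (sets M)"
  define emb where "emb P = restrict (\<lambda>A. measure P A) (sets M)" for P :: "'a measure"
  have K0: "compactin PT (emb ` \<Lambda>)" using cpt unfolding setwise_compact_def PT_def emb_def .
  have Rs: "R i \<in> sets M" for i using R(1) by auto
  have Vmono: "V (R j) \<le> V (R i)" if "i \<le> j" for i j
    using cap Rs R(2) that unfolding capacity_def decseq_def by blast
  have V0: "0 \<le> V (R i)" for i using cap Rs unfolding capacity_def by blast
  have small: "\<exists>N. V (R N) < \<delta>" if d: "\<delta> > 0" for \<delta>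
  proof (rule ccontr)
    assume "\<not> ?thesis"
    then have big: "\<And>N. \<delta> \<le> V (R N)" by (simp add: not_less)
    define C where "C n = {\<psi> \<in> topspace PT. \<psi> (R n) \<in> {\<delta>..}}" for n
    have Ccl: "closedin PT (C n)" for n
      unfolding C_def PT_def
      by (rule closed_pred) (auto intro: continuous_map_product_projection Rs)
    have "\<exists>x\<in>emb ` \<Lambda>. \<forall>n. x \<in> C n"
    proof (rule fip_nested[OF K0 Ccl])
      fix N
      obtain P where P: "P \<in> \<Lambda>" "V (R N) = measure P (R N)" using mx[OF Rs] by blast
      have "P \<in> probs_on M" using P L by auto
      then have sP: "sets P = sets M" and pP: "prob_space P" by (auto simp: probs_on_def)
      have "\<forall>n\<le>N. emb P \<in> C n"
      proof (intro allI impI)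
        fix n assume "n \<le> N"
        then have "R N \<subseteq> R n" using R(2) by (simp add: decseq_def)
        then have "measure P (R N) \<le> measure P (R n)"
          using pP Rs sP by (intro finite_measure.finite_measure_mono prob_space.axioms(1)) auto
        then show "emb P \<in> C n" using big[of N] P Rs
          by (auto simp: C_def PT_def emb_def)
      qed
      then show "\<exists>x\<in>emb ` \<Lambda>. \<forall>n\<le>N. x \<in> C n" using P by blast
    qed
    then obtain P where P: "P \<in> \<Lambda>" "\<And>n. emb P \<in> C n" by blast
    have "P \<in> probs_on M" using P L by auto
    then have sP: "sets P = sets M" and pP: "prob_space P" by (auto simp: probs_on_def)
    have ge: "\<delta> \<le> measure P (R n)" for n using P(2)[of n] Rs by (auto simp: C_def emb_def)
    have "(\<lambda>i. measure P (R i)) \<longlonglongrightarrow> measure P (\<Inter>i. R i)"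
      using pP R Rs sP by (intro finite_measure.finite_Lim_measure_decseq prob_space.axioms(1)) auto
    then have "(\<lambda>i. measure P (R i)) \<longlonglongrightarrow> 0" using R(3) by simp
    then have "\<delta> \<le> 0" by (rule LIMSEQ_le_const) (use ge in auto)
    then show False using d by simp
  qed
  show ?thesis
  proof (rule LIMSEQ_I)
    fix r :: real assume "0 < r"
    then obtain N where N: "V (R N) < r" using small by blast
    show "\<exists>no. \<forall>n\<ge>no. norm (V (R n) - 0) < r"
      using N Vmono V0 by (intro exI[of _ N]) (auto intro: le_less_trans)
  qed
qed



lemma exists_inv_prob:
  assumes T: "T \<in> M \<rightarrow>\<^sub>M M" and up: "upper_probability M V" and ic: "invariant_capacity M T V"
    and B: "B \<in> invariant_sets M T"
  shows "\<exists>Q. invariant_prob M T Q \<and> measure Q B = V B"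
proof -
  obtain \<Lambda> where cap: "capacity M V" and L: "\<Lambda> \<subseteq> probs_on M"
    and mx: "\<And>A. A \<in> sets M \<Longrightarrow> (\<exists>P\<in>\<Lambda>. V A = measure P A)"
    and le: "\<And>A P. A \<in> sets M \<Longrightarrow> P \<in> \<Lambda> \<Longrightarrow> measure P A \<le> V A"
    using up unfolding upper_probability_def by blast
  have Bs: "B \<in> sets M" and Binv: "T -` B \<inter> space M = B" using B by (auto simp: invariant_sets_def)
  obtain P0 where P0: "P0 \<in> \<Lambda>" "V B = measure P0 B" using mx[OF Bs] by blast
  have "P0 \<in> probs_on M" using P0 L by auto
  then have sP0: "sets P0 = sets M" and pP0: "prob_space P0" by (auto simp: probs_on_def)
  have spP0: "space P0 = space M" using sP0 by (rule sets_eq_imp_space_eq)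
  interpret P0: prob_space P0 by fact
  have Tsp: "T x \<in> space M" if "x \<in> space M" for x using measurable_space[OF T that] .
  define pre where "pre i C = (T ^^ i) -` C \<inter> space M" for i C
  have pre_sets: "pre i C \<in> sets M" if "C \<in> sets M" for i C
    unfolding pre_def using measurable_sets[OF funpow_meas[OF T] that] .
  have pre_Suc1: "pre (Suc i) C = T -` (pre i C) \<inter> space M" for i C
    unfolding pre_def using Tsp by (auto simp: funpow_Suc_right simp del: funpow.simps)
  have pre_Suc2: "pre (Suc i) C = pre i (T -` C \<inter> space M)" for i C
    unfolding pre_def using measurable_space[OF funpow_meas[OF T]] by auto
  have pre_V: "V (pre i C) = V C" if "C \<in> sets M" for i C
  proof (induction i)
    case 0
    have "pre 0 C = C" unfolding pre_def using sets.sets_into_space[OF that] by auto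
    then show ?case by simp
  next
    case (Suc i)
    then show ?case using ic pre_sets[OF that, of i] unfolding invariant_capacity_def pre_Suc1 by simp
  qed
  have pre_B: "pre i B = B" for i
  proof (induction i)
    case 0 show ?case unfolding pre_def using sets.sets_into_space[OF Bs] by auto
  next
    case (Suc i) then show ?case using Binv by (simp add: pre_Suc1)
  qed
  have pre_space: "pre i (space M) = space M" for i
    unfolding pre_def using measurable_space[OF funpow_meas[OF T]] by auto
  define \<nu> where "\<nu> i C = measure P0 (pre i C)" for i C
  have \<nu>_le: "\<nu> i C \<le> V C" if "C \<in> sets M" for i C
    unfolding \<nu>_def using le[OF pre_sets[OF that] P0(1)] pre_V[OF that] by simp
  have \<nu>_01: "0 \<le> \<nu> i C" "\<nu> i C \<le> 1" for i C unfolding \<nu>_def by auto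
  have \<nu>_space: "\<nu> i (space M) = 1" for i unfolding \<nu>_def pre_space using spP0 P0.prob_space by simp
  have \<nu>_add: "\<nu> i (C1 \<union> C2) = \<nu> i C1 + \<nu> i C2"
    if "C1 \<in> sets M" "C2 \<in> sets M" "C1 \<inter> C2 = {}" for i C1 C2
  proof -
    have "pre i (C1 \<union> C2) = pre i C1 \<union> pre i C2" "pre i C1 \<inter> pre i C2 = {}"
      unfolding pre_def using that(3) by auto
    then show ?thesis unfolding \<nu>_def
      using P0.finite_measure_Union[of "pre i C1" "pre i C2"] pre_sets that sP0 by simp
  qed
  have \<nu>_T: "\<nu> i (T -` C \<inter> space M) = \<nu> (Suc i) C" for i C
    unfolding \<nu>_def pre_Suc2 ..
  have \<nu>_B: "\<nu> i B = measure P0 B" for i unfolding \<nu>_def pre_B ..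
  define Qa where "Qa n C = (\<Sum>i<Suc n. \<nu> i C) / real (Suc n)" for n C
  have Qa_01: "0 \<le> Qa n C" "Qa n C \<le> 1" for n C
  proof -
    show "0 \<le> Qa n C" unfolding Qa_def using \<nu>_01 by (simp add: sum_nonneg)
    have "(\<Sum>i<Suc n. \<nu> i C) \<le> (\<Sum>i<Suc n. 1)" by (intro sum_mono \<nu>_01)
    then show "Qa n C \<le> 1" unfolding Qa_def by simp
  qed
  have Qa_space: "Qa n (space M) = 1" for n unfolding Qa_def \<nu>_space by simp
  have Qa_add: "Qa n (C1 \<union> C2) = Qa n C1 + Qa n C2"
    if "C1 \<in> sets M" "C2 \<in> sets M" "C1 \<inter> C2 = {}" for n C1 C2
    unfolding Qa_def \<nu>_add[OF that] sum.distrib by (simp add: add_divide_distrib)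
  have Qa_le: "Qa n C \<le> V C" if "C \<in> sets M" for n C
  proof -
    have "(\<Sum>i<Suc n. \<nu> i C) \<le> (\<Sum>i<Suc n. V C)" by (intro sum_mono \<nu>_le that)
    then show ?thesis unfolding Qa_def by (simp add: divide_le_eq mult.commute)
  qed
  have Qa_B: "Qa n B = measure P0 B" for n unfolding Qa_def \<nu>_B by simp
  have Qa_T: "\<bar>Qa n (T -` C \<inter> space M) - Qa n C\<bar> \<le> 1 / real (Suc n)" for n C
  proof -
    have "(\<Sum>i<Suc n. \<nu> i (T -` C \<inter> space M)) - (\<Sum>i<Suc n. \<nu> i C) = (\<Sum>i<Suc n. \<nu> (Suc i) C - \<nu> i C)"
      unfolding \<nu>_T by (simp add: sum_subtractf)
    also have "\<dots> = \<nu> (Suc n) C - \<nu> 0 C" by (rule sum_lessThan_telescope)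
    finally have eq: "Qa n (T -` C \<inter> space M) - Qa n C = (\<nu> (Suc n) C - \<nu> 0 C) / real (Suc n)"
      unfolding Qa_def by (simp add: diff_divide_distrib[symmetric])
    have "\<bar>\<nu> (Suc n) C - \<nu> 0 C\<bar> \<le> 1" using \<nu>_01[of "Suc n" C] \<nu>_01[of 0 C] by linarith
    then show ?thesis unfolding eq by (simp add: divide_right_mono)
  qed
  define PT :: "('a set \<Rightarrow> real) topology" where "PT = product_topology (\<lambda>_. euclideanreal) (sets M)"
  define \<phi>n where "\<phi>n n = restrict (Qa n) (sets M)" for n
  define K where "K = PiE (sets M) (\<lambda>_. {0..1::real})"
  have Kc: "compactin PT K" unfolding PT_def K_def by (simp add: compactin_PiE)
  have topPT: "topspace PT = PiE (sets M) (\<lambda>_. UNIV)" unfolding PT_def by simp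
  have \<phi>nK: "\<phi>n n \<in> K" for n unfolding \<phi>n_def K_def using Qa_01 by auto
  have \<phi>nT: "\<phi>n n \<in> topspace PT" for n unfolding \<phi>n_def topPT by auto
  define Cl where "Cl m = PT closure_of (\<phi>n ` {m..})" for m
  have "\<exists>x\<in>K. \<forall>m. x \<in> Cl m"
  proof (rule fip_nested[OF Kc])
    show "closedin PT (Cl m)" for m unfolding Cl_def by simp
    fix N
    have "\<phi>n N \<in> Cl m" if "m \<le> N" for m
    proof -
      have "\<phi>n ` {m..} \<subseteq> topspace PT" using \<phi>nT by auto
      then have "\<phi>n ` {m..} \<subseteq> Cl m" unfolding Cl_def by (rule closure_of_subset)
      then show ?thesis using that by auto
    qed
    then show "\<exists>x\<in>K. \<forall>m\<le>N. x \<in> Cl m" using \<phi>nK by blast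
  qed
  then obtain \<phi> where \<phi>K: "\<phi> \<in> K" and \<phi>Cl: "\<And>m. \<phi> \<in> Cl m" by blast
  have cprop: "\<phi> \<in> Z" if "closedin PT Z" "\<And>n. m \<le> n \<Longrightarrow> \<phi>n n \<in> Z" for Z m
  proof -
    have "\<phi>n ` {m..} \<subseteq> Z" using that(2) by auto
    then have "Cl m \<subseteq> Z" unfolding Cl_def by (rule closure_of_minimal) (rule that(1))
    then show ?thesis using \<phi>Cl by auto
  qed
  have proj: "continuous_map PT euclideanreal (\<lambda>\<psi>. \<psi> C)" if "C \<in> sets M" for C
    unfolding PT_def by (rule continuous_map_product_projection[OF that])
  have cpred: "\<phi> F \<in> S" if "F \<in> sets M" "closed S" "\<And>n. m \<le> n \<Longrightarrow> Qa n F \<in> S" for F S m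
  proof -
    have "\<phi> \<in> {\<psi> \<in> topspace PT. \<psi> F \<in> S}"
      by (rule cprop[OF closed_pred[OF proj[OF that(1)] that(2)]]) (use \<phi>nT that in \<open>auto simp: \<phi>n_def\<close>)
    then show ?thesis by simp
  qed
  have \<phi>01: "0 \<le> \<phi> C" "\<phi> C \<le> 1" if "C \<in> sets M" for C using \<phi>K that unfolding K_def by auto
  have \<phi>space: "\<phi> (space M) = 1"
    using cpred[of "space M" "{1}" 0] Qa_space by auto
  have \<phi>le: "\<phi> C \<le> V C" if "C \<in> sets M" for C
    using cpred[of C "{..V C}" 0] Qa_le that by auto
  have \<phi>B: "\<phi> B = measure P0 B"
    using cpred[of B "{measure P0 B}" 0] Qa_B Bs by auto
  have \<phi>add: "\<phi> (C1 \<union> C2) = \<phi> C1 + \<phi> C2"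
    if C: "C1 \<in> sets M" "C2 \<in> sets M" "C1 \<inter> C2 = {}" for C1 C2
  proof -
    have U: "C1 \<union> C2 \<in> sets M" using C by auto
    have "\<phi> \<in> {\<psi> \<in> topspace PT. \<psi> (C1 \<union> C2) - \<psi> C1 - \<psi> C2 \<in> {0}}"
    proof (rule cprop[of _ 0, OF closed_pred])
      show "continuous_map PT euclideanreal (\<lambda>\<psi>. \<psi> (C1 \<union> C2) - \<psi> C1 - \<psi> C2)"
        by (intro continuous_map_diff proj U C)
      show "\<phi>n n \<in> {\<psi> \<in> topspace PT. \<psi> (C1 \<union> C2) - \<psi> C1 - \<psi> C2 \<in> {0}}" for n
        using \<phi>nT[of n] Qa_add[OF C, of n] U C by (simp add: \<phi>n_def)
    qed simp
    then show ?thesis by simp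
  qed
  have \<phi>T: "\<phi> (T -` C \<inter> space M) = \<phi> C" if C: "C \<in> sets M" for C
  proof -
    have TC: "T -` C \<inter> space M \<in> sets M" using measurable_sets[OF T C] .
    have bd: "\<bar>\<phi> (T -` C \<inter> space M) - \<phi> C\<bar> \<le> 1 / real (Suc m)" for m
    proof -
      have "\<phi> \<in> {\<psi> \<in> topspace PT. \<psi> (T -` C \<inter> space M) - \<psi> C \<in> {- (1 / real (Suc m)) .. 1 / real (Suc m)}}"
      proof (rule cprop[of _ m, OF closed_pred])
        show "continuous_map PT euclideanreal (\<lambda>\<psi>. \<psi> (T -` C \<inter> space M) - \<psi> C)"
          by (intro continuous_map_diff proj TC C)
        fix n assume n: "m \<le> n"
        have "1 / real (Suc n) \<le> 1 / real (Suc m)" using n by (simp add: frac_le)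
        then have "\<bar>Qa n (T -` C \<inter> space M) - Qa n C\<bar> \<le> 1 / real (Suc m)" using Qa_T[of n C] by linarith
        then show "\<phi>n n \<in> {\<psi> \<in> topspace PT. \<psi> (T -` C \<inter> space M) - \<psi> C \<in> {- (1 / real (Suc m)) .. 1 / real (Suc m)}}"
          using \<phi>nT[of n] TC C by (simp add: \<phi>n_def abs_le_iff)
      qed simp
      then show ?thesis by (simp add: abs_le_iff)
    qed
    show ?thesis
    proof (rule ccontr)
      assume ne: "\<phi> (T -` C \<inter> space M) \<noteq> \<phi> C"
      then have "\<bar>\<phi> (T -` C \<inter> space M) - \<phi> C\<bar> > 0" by simp
      then obtain n0 where n0: "n0 > 0" "inverse (real n0) < \<bar>\<phi> (T -` C \<inter> space M) - \<phi> C\<bar>"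
        using ex_inverse_of_nat_less by blast
      then obtain m where "n0 = Suc m" by (cases n0) auto
      with n0 bd[of m] show False by (simp add: inverse_eq_divide)
    qed
  qed
  have \<phi>empty: "\<phi> {} = 0" using \<phi>add[of "{}" "{}"] by simp
  define \<mu> where "\<mu> C = ennreal (\<phi> C)" for C
  have pos: "positive (sets M) \<mu>" unfolding positive_def \<mu>_def \<phi>empty by simp
  have add: "additive (sets M) \<mu>"
    unfolding additive_def
  proof (intro ballI impI)
    fix x y assume xy: "x \<in> sets M" "y \<in> sets M" "x \<inter> y = {}"
    have "\<mu> (x \<union> y) = ennreal (\<phi> x + \<phi> y)" unfolding \<mu>_def using \<phi>add[OF xy] by simp
    also have "\<dots> = \<mu> x + \<mu> y" unfolding \<mu>_def by (rule ennreal_plus) (use \<phi>01 xy in auto)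
    finally show "\<mu> (x \<union> y) = \<mu> x + \<mu> y" .
  qed
  have ca: "countably_additive (sets M) \<mu>"
  proof (rule sets.empty_continuous_imp_countably_additive[OF pos add])
    show "\<forall>A\<in>sets M. \<mu> A \<noteq> \<infinity>" unfolding \<mu>_def by simp
    fix R :: "nat \<Rightarrow> 'a set" assume R: "range R \<subseteq> sets M" "decseq R" "(\<Inter>i. R i) = {}"
    have Vl: "(\<lambda>i. V (R i)) \<longlonglongrightarrow> 0" by (rule V_cont[OF up R])
    have e1: "eventually (\<lambda>i. 0 \<le> \<phi> (R i)) sequentially" using \<phi>01 R(1) by auto
    have e2: "eventually (\<lambda>i. \<phi> (R i) \<le> V (R i)) sequentially" using \<phi>le R(1) by auto
    have "(\<lambda>i. \<phi> (R i)) \<longlonglongrightarrow> 0"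
      by (rule tendsto_sandwich[OF e1 e2 tendsto_const Vl])
    then have "(\<lambda>i. ennreal (\<phi> (R i))) \<longlonglongrightarrow> ennreal 0" by (rule tendsto_ennrealI)
    then show "(\<lambda>i. \<mu> (R i)) \<longlonglongrightarrow> 0" unfolding \<mu>_def by simp
  qed
  define Q where "Q = measure_of (space M) (sets M) \<mu>"
  have sQ: "sets Q = sets M" unfolding Q_def by simp
  have spQ: "space Q = space M" unfolding Q_def by simp
  have emQ: "emeasure Q C = ennreal (\<phi> C)" if "C \<in> sets M" for C
    unfolding Q_def using emeasure_measure_of_sigma[OF sets.sigma_algebra_axioms pos ca that]
    by (simp add: \<mu>_def)
  have mQ: "measure Q C = \<phi> C" if "C \<in> sets M" for C
    using emQ[OF that] \<phi>01[OF that] by (simp add: measure_def)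
  have pQ: "prob_space Q" by (rule prob_spaceI) (simp add: spQ emQ \<phi>space)
  have "invariant_prob M T Q"
    unfolding invariant_prob_def probs_on_def
    using pQ sQ mQ \<phi>T measurable_sets[OF T] by auto
  moreover have "measure Q B = V B" using mQ[OF Bs] \<phi>B P0(2) by simp
  ultimately show ?thesis by blast
qed


theorem theorem3p1:
  fixes M :: "'a measure" and T :: "'a \<Rightarrow> 'a" and V :: "'a set \<Rightarrow> real"
    and f g :: "'a \<Rightarrow> real"
  assumes "standard_space_via TYPE('b) M"
    and "T \<in> M \<rightarrow>\<^sub>M M"
    and "upper_probability M V"
    and "invariant_capacity M T V"
    and "f \<in> borel_measurable M" and "bounded (f ` space M)"
    and "g \<in> borel_measurable (inv_algebra M T)" and "bounded (g ` space M)"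
    and "\<And>P. invariant_prob M T P \<Longrightarrow>
           (AE x in P. real_cond_exp P (inv_algebra M T) f x = g x)"
  shows "V (space M - {\<omega>\<in>space M.
           (\<lambda>n. (\<Sum>i<n. f ((T ^^ i) \<omega>)) / real n) \<longlonglongrightarrow> g \<omega>}) = 0"
proof -
  note T = assms(2) and up = assms(3) and ic = assms(4) and fm = assms(5) and fb = assms(6)
    and gm = assms(7) and gb = assms(8) and ae = assms(9)
  have BI: "Bset M T f g \<in> invariant_sets M T" by (rule Bset_inv[OF T fm gm])
  obtain Q where Qi: "invariant_prob M T Q" and mQ: "measure Q (Bset M T f g) = V (Bset M T f g)"
    using exists_inv_prob[OF T up ic BI] by blast
  have "measure Q (Bset M T f g) = 0" by (rule Bset_null[OF Qi T fm fb gm gb ae[OF Qi]])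
  then have VB: "V (Bset M T f g) = 0" using mQ by simp
  have Bs: "Bset M T f g \<in> sets M" using BI by (simp add: invariant_sets_def)
  define A0 where "A0 = space M - {\<omega>\<in>space M. (\<lambda>n. (\<Sum>i<n. f ((T ^^ i) \<omega>)) / real n) \<longlonglongrightarrow> g \<omega>}"
  have sub: "subalgebra M (inv_algebra M T)" by (rule sub_inv[OF T])
  have gM: "g \<in> borel_measurable M" by (rule measurable_from_subalg[OF sub gm])
  have um: "(\<lambda>\<omega>. (\<Sum>i<n. f ((T ^^ i) \<omega>)) / real n) \<in> borel_measurable M" for n
  proof -
    have "birk T f n \<in> borel_measurable M" by (rule birk_meas[OF T fm])
    then show ?thesis unfolding birk_def by measurable
  qed
  have "Measurable.pred M (\<lambda>\<omega>. (\<lambda>n. (\<Sum>i<n. f ((T ^^ i) \<omega>)) / real n) \<longlonglongrightarrow> g \<omega>)"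
    by (rule measurable_limit2[OF um gM])
  then have "{\<omega>\<in>space M. (\<lambda>n. (\<Sum>i<n. f ((T ^^ i) \<omega>)) / real n) \<longlonglongrightarrow> g \<omega>} \<in> sets M"
    by (simp add: pred_def)
  then have A0s: "A0 \<in> sets M" unfolding A0_def by auto
  have A0B: "A0 \<subseteq> Bset M T f g"
  proof
    fix x assume x: "x \<in> A0"
    then have xs: "x \<in> space M" unfolding A0_def by auto
    show "x \<in> Bset M T f g"
    proof (rule ccontr)
      assume "x \<notin> Bset M T f g"
      then have "(\<lambda>n. (\<Sum>i<n. f ((T ^^ i) x)) / real n) \<longlonglongrightarrow> g x"
        by (rule conv_outside_Bset[OF T gm xs])
      then show False using x xs unfolding A0_def by auto
    qed
  qed
  have cap: "capacity M V" using up by (simp add: upper_probability_def)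
  have "V A0 \<le> V (Bset M T f g)" using cap A0s Bs A0B unfolding capacity_def by blast
  moreover have "0 \<le> V A0" using cap A0s unfolding capacity_def by blast
  ultimately have "V A0 = 0" using VB by simp
  then show ?thesis unfolding A0_def .
qed

end
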